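(* Let $B\in\mathbb R^{n\times m}$, $f:\mathbb R^m\to\mathbb R$, $h:\mathbb R^n\to\mathbb R$ differentiable, and $T_{\mathcal U},\mathcal I_{\mathcal V}$ ($m\times m$), $T_{\mathcal P},\mathcal I_{\mathcal Q}$ ($n\times n$) symmetric positive definite. Let $f_B(u)=f(u)+\frac12(B^\top T_{\mathcal P}^{-1}Bu,u)$, $h_B(p)=h(p)+\frac12(BT_{\mathcal U}^{-1}B^\top p,p)$, $e_{\mathcal U}(u)=u-T_{\mathcal U}^{-1}\nabla f(u)$, $e_{\mathcal P}(p)=p-T_{\mathcal P}^{-1}\nabla h(p)$, and $$\mathcal G^u(u,p)=-\mathcal I_{\mathcal V}^{-1}\big(\nabla f_B(u)+B^\top(p-T_{\mathcal P}^{-1}\nabla h(p))\big),\qquad \mathcal G^p(u,p)=-\mathcal I_{\mathcal Q}^{-1}\big(\nabla h_B(p)-B(u-T_{\mathcal U}^{-1}\nabla f(u))\big).$$ Assume $\nabla f_B$ and $\nabla h_B$ are Lipschitz with constants $L_{f_B,\mathcal I_{\mathcal V}}$, $L_{h_B,\mathcal I_{\mathcal Q}}$ (i.e. $\|\nabla f_B(u_1)-\nabla f_B(u_2)\|_{\mathcal I_{\mathcal V}^{-1}}\le L_{f_B,\mathcal I_{\mathcal V}}\|u_1-u_2\|_{\mathcal I_{\mathcal V}}$ and $\|\nabla h_B(p_1)-\nabla h_B(p_2)\|_{\mathcal I_{\mathcal Q}^{-1}}\le L_{h_B,\mathcal I_{\mathcal Q}}\|p_1-p_2\|_{\mathcal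 I_{\mathcal Q}}$), and let $L_{e_{\mathcal U},\mathcal I_{\mathcal V}}$, $L_{e_{\mathcal P},\mathcal I_{\mathcal Q}}$ be the Lipschitz constants of $e_{\mathcal U}$ in $\|\cdot\|_{\mathcal I_{\mathcal V}}$ and of $e_{\mathcal P}$ in $\|\cdot\|_{\mathcal I_{\mathcal Q}}$. Then for all $u_1,u_2\in\mathbb R^m$, $p_1,p_2\in\mathbb R^n$, $$\|\mathcal G^u(u_1,p_1)-\mathcal G^u(u_2,p_2)\|_{\mathcal I_{\mathcal V}}\le L_{f_B,\mathcal I_{\mathcal V}}\|u_1-u_2\|_{\mathcal I_{\mathcal V}}+L_SL_{e_{\mathcal P},\mathcal I_{\mathcal Q}}\|p_1-p_2\|_{\mathcal I_{\mathcal Q}},$$ $$\|\mathcal G^p(u_1,p_1)-\mathcal G^p(u_2,p_2)\|_{\mathcal I_{\mathcal Q}}\le L_{h_B,\mathcal I_{\mathcal Q}}\|p_1-p_2\|_{\mathcal I_{\mathcal Q}}+L_SL_{e_{\mathcal U},\mathcal I_{\mathcal V}}\|u_1-u_2\|_{\mathcal I_{\mathcal V}},$$ where $L_S^2=\lambda_{\max}(\mathcal I_{\mathcal Q}^{-1}B\mathcal I_{\mathcal V}^{-1}B^\top)$.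
   Context: For SPD $M$, $\|x\|_M=(Mx,x)^{1/2}$. *)

theory Defs
  imports "HOL-Analysis.Analysis"
begin

definition spd :: "real^'k^'k \<Rightarrow> bool" where
  "spd M \<longleftrightarrow> transpose M = M \<and> (\<forall>x. x \<noteq> 0 \<longrightarrow> 0 < (M *v x) \<bullet> x)"

definition mnorm :: "real^'k^'k \<Rightarrow> real^'k \<Rightarrow> real" where
  "mnorm M x = sqrt ((M *v x) \<bullet> x)"

definition real_eigenvalues :: "real^'k^'k \<Rightarrow> real set" where
  "real_eigenvalues M = {c. \<exists>v. v \<noteq> 0 \<and> M *v v = c *s v}"

definition lambda_max :: "real^'k^'k \<Rightarrow> real" where
  "lambda_max M = Max (real_eigenvalues M)"

end

theory Submission
  imports Defs
begin

definition sympd :: "real^'k^'k \<Rightarrow> bool" where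
  "sympd M \<longleftrightarrow> (\<forall>x y. (M *v x) \<bullet> y = x \<bullet> (M *v y)) \<and> (\<forall>x. x \<noteq> 0 \<longrightarrow> 0 < (M *v x) \<bullet> x)"

lemma tr_dot: "(transpose B *v y) \<bullet> x = y \<bullet> ((B::real^'a^'b) *v x)"
  by (simp add: dot_lmul_matrix)

lemma spd_sympd: "spd M \<Longrightarrow> sympd M"
  unfolding spd_def sympd_def by (metis tr_dot)

lemma sympd_inv:
  assumes "sympd M"
  shows "M *v (matrix_inv M *v x) = x" "matrix_inv M *v (M *v x) = x"
proof -
  have "\<forall>x. M *v x = 0 \<longrightarrow> x = 0" using assms unfolding sympd_def
    by (metis inner_zero_left less_irrefl)
  then have "invertible M" using invertible_left_inverse matrix_left_invertible_ker by blast
  then have "M ** matrix_inv M = mat 1 \<and> matrix_inv M ** M = mat 1"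
    unfolding invertible_def matrix_inv_def by (rule someI_ex)
  then show "M *v (matrix_inv M *v x) = x" "matrix_inv M *v (M *v x) = x"
    by (simp_all add: matrix_vector_mul_assoc)
qed

lemma sympd_matrix_inv:
  assumes "sympd M" shows "sympd (matrix_inv M)"
proof -
  note i = sympd_inv[OF assms]
  have s: "\<And>x y. (M *v x) \<bullet> y = x \<bullet> (M *v y)" and p: "\<And>x. x \<noteq> 0 \<Longrightarrow> 0 < (M *v x) \<bullet> x"
    using assms unfolding sympd_def by auto
  have "(matrix_inv M *v x) \<bullet> y = x \<bullet> (matrix_inv M *v y)" for x y
    by (metis i s)
  moreover have "0 < (matrix_inv M *v x) \<bullet> x" if "x \<noteq> 0" for x
  proof -
    have "matrix_inv M *v x \<noteq> 0" using i(1)[of x] that by auto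
    then have "0 < (M *v (matrix_inv M *v x)) \<bullet> (matrix_inv M *v x)" by (rule p)
    then show ?thesis by (simp add: i inner_commute)
  qed
  ultimately show ?thesis unfolding sympd_def by auto
qed

lemma mnorm_nonneg: "sympd M \<Longrightarrow> 0 \<le> mnorm M x"
  unfolding mnorm_def sympd_def by (cases "x = 0") (auto simp: less_imp_le)

lemma mnorm_sq: "sympd M \<Longrightarrow> (mnorm M x)^2 = (M *v x) \<bullet> x"
  unfolding mnorm_def sympd_def by (cases "x = 0") (auto simp: less_imp_le)

lemma mnorm_zero: "sympd M \<Longrightarrow> mnorm M x = 0 \<Longrightarrow> x = 0"
  unfolding mnorm_def sympd_def by (metis less_irrefl real_sqrt_eq_zero_cancel_iff)

lemma mnorm_minus: "mnorm M (-x) = mnorm M x"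
  unfolding mnorm_def by (simp add: matrix_vector_mult_diff_distrib[of M 0 x, simplified])

lemma quad_expand:
  assumes "sympd M"
  shows "(M *v (a *\<^sub>R x + b *\<^sub>R y)) \<bullet> (a *\<^sub>R x + b *\<^sub>R y)
        = a^2 * ((M *v x) \<bullet> x) + 2*a*b*((M *v x) \<bullet> y) + b^2 * ((M *v y) \<bullet> y)"
proof -
  have s: "(M *v y) \<bullet> x = (M *v x) \<bullet> y" using assms unfolding sympd_def by (metis inner_commute)
  show ?thesis
    by (simp add: matrix_vector_right_distrib matrix_vector_mult_scaleR inner_add_left inner_add_right s
        power2_eq_square algebra_simps)
qed

lemma mnorm_cs:
  assumes "sympd M"
  shows "(M *v x) \<bullet> y \<le> mnorm M x * mnorm M y"
proof (cases "x = 0 \<or> y = 0")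
  case True then show ?thesis using mnorm_nonneg[OF assms] by auto
next
  case False
  define a where "a = mnorm M x"
  define b where "b = mnorm M y"
  have a: "a > 0" using False mnorm_zero[OF assms] mnorm_nonneg[OF assms] unfolding a_def
    by (metis order_le_less)
  have b: "b > 0" using False mnorm_zero[OF assms] mnorm_nonneg[OF assms] unfolding b_def
    by (metis order_le_less)
  have "0 \<le> (mnorm M (b *\<^sub>R x + (-a) *\<^sub>R y))^2" by simp
  also have "\<dots> = b^2 * a^2 + 2*b*(-a)*((M *v x) \<bullet> y) + (-a)^2 * b^2"
    using quad_expand[OF assms, of b x "-a" y] mnorm_sq[OF assms] unfolding a_def b_def by simp
  finally have "2*a*b*((M *v x) \<bullet> y) \<le> 2*a*b*(a*b)" by (simp add: power2_eq_square algebra_simps)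
  then have "(M *v x) \<bullet> y \<le> a*b" using a b by simp
  then show ?thesis unfolding a_def b_def .
qed

lemma mnorm_triangle:
  assumes "sympd M"
  shows "mnorm M (x + y) \<le> mnorm M x + mnorm M y"
proof -
  have "(mnorm M (x + y))^2 = (mnorm M x)^2 + 2 * ((M *v x) \<bullet> y) + (mnorm M y)^2"
    using quad_expand[OF assms, of 1 x 1 y] mnorm_sq[OF assms] by simp
  also have "\<dots> \<le> (mnorm M x + mnorm M y)^2"
    using mnorm_cs[OF assms, of x y] by (simp add: power2_eq_square algebra_simps)
  finally show ?thesis
    using mnorm_nonneg[OF assms] by (meson add_nonneg_nonneg power2_le_imp_le)
qed

lemma mnorm_inv:
  assumes "sympd M"
  shows "mnorm M (matrix_inv M *v x) = mnorm (matrix_inv M) x"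
  unfolding mnorm_def using sympd_inv[OF assms] by (simp add: inner_commute)

lemma dual_cs:
  assumes "sympd M"
  shows "x \<bullet> z \<le> mnorm M x * mnorm (matrix_inv M) z"
proof -
  have "x \<bullet> z = (M *v x) \<bullet> (matrix_inv M *v z)"
    using assms sympd_inv[OF assms] unfolding sympd_def by metis
  also have "\<dots> \<le> mnorm M x * mnorm M (matrix_inv M *v z)" by (rule mnorm_cs[OF assms])
  finally show ?thesis using mnorm_inv[OF assms] by simp
qed


lemma eig_char:
  assumes P: "sympd P"
  shows "c \<in> real_eigenvalues (matrix_inv P ** K) \<longleftrightarrow> (\<exists>v. v \<noteq> 0 \<and> K *v v = c *\<^sub>R (P *v v))"
proof -
  have "matrix_inv P *v (K *v v) = c *\<^sub>R v \<longleftrightarrow> K *v v = c *\<^sub>R (P *v v)" for v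
    by (metis sympd_inv[OF P] matrix_vector_mult_scaleR)
  then show ?thesis unfolding real_eigenvalues_def
    by (simp add: scalar_mult_eq_scaleR matrix_vector_mul_assoc[symmetric])
qed

lemma eig_finite:
  fixes K :: "real^'k^'k"
  assumes P: "sympd P" and Ks: "\<And>x y. (K *v x) \<bullet> y = x \<bullet> (K *v y)"
  shows "finite (real_eigenvalues (matrix_inv P ** K))"
proof -
  let ?E = "real_eigenvalues (matrix_inv P ** K)"
  define ev where "ev c = (SOME v. v \<noteq> 0 \<and> K *v v = c *\<^sub>R (P *v v))" for c
  have ev: "ev c \<noteq> 0 \<and> K *v ev c = c *\<^sub>R (P *v ev c)" if "c \<in> ?E" for c
    using that unfolding eig_char[OF P] ev_def by (rule someI_ex)
  have Ps: "\<And>x y. (P *v x) \<bullet> y = x \<bullet> (P *v y)" and Pp: "\<And>x. x \<noteq> 0 \<Longrightarrow> 0 < (P *v x) \<bullet> x"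
    using P unfolding sympd_def by auto
  have orth: "(P *v ev c) \<bullet> ev d = 0" if "c \<in> ?E" "d \<in> ?E" "c \<noteq> d" for c d
  proof -
    have "(K *v ev c) \<bullet> ev d = c * ((P *v ev c) \<bullet> ev d)" using ev[OF that(1)] by simp
    moreover have "(K *v ev c) \<bullet> ev d = d * ((P *v ev c) \<bullet> ev d)"
      using ev[OF that(2)] Ks Ps by (simp add: inner_commute)
    ultimately show ?thesis using that(3) by auto
  qed
  have inj: "inj_on ev ?E"
  proof
    fix c d assume cd: "c \<in> ?E" "d \<in> ?E" "ev c = ev d"
    show "c = d"
    proof (rule ccontr)
      assume "c \<noteq> d"
      then have "(P *v ev c) \<bullet> ev c = 0" using orth[OF cd(1,2)] cd(3) by simp
      then show False using Pp ev[OF cd(1)] by force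
    qed
  qed
  have "independent (ev ` ?E)"
    unfolding independent_explicit_finite_subsets
  proof (intro allI impI ballI)
    fix S u v assume S: "S \<subseteq> ev ` ?E" "finite S" and sum: "(\<Sum>v\<in>S. u v *\<^sub>R v) = 0" and v: "v \<in> S"
    obtain c where c: "c \<in> ?E" "v = ev c" using S v by auto
    have "0 = (P *v v) \<bullet> (\<Sum>w\<in>S. u w *\<^sub>R w)" using sum by simp
    also have "\<dots> = (\<Sum>w\<in>S. u w * ((P *v v) \<bullet> w))" by (simp add: inner_sum_right)
    also have "\<dots> = u v * ((P *v v) \<bullet> v)"
    proof -
      have z: "(\<Sum>w\<in>S - {v}. u w * ((P *v v) \<bullet> w)) = 0"
      proof (rule sum.neutral, rule ballI)
        fix w assume w: "w \<in> S - {v}"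
        obtain d where d: "d \<in> ?E" "w = ev d" using S w by auto
        have "c \<noteq> d" using c d w by auto
        then show "u w * ((P *v v) \<bullet> w) = 0" using orth[OF c(1) d(1)] c d by simp
      qed
      show ?thesis using sum.remove[OF S(2) v, of "\<lambda>w. u w * ((P *v v) \<bullet> w)"] z by simp
    qed
    finally have "u v * ((P *v v) \<bullet> v) = 0" by simp
    moreover have "(P *v v) \<bullet> v > 0" using Pp ev[OF c(1)] c(2) by simp
    ultimately show "u v = 0" by simp
  qed
  then have "finite (ev ` ?E)" using independent_bound by blast
  then show ?thesis using finite_imageD inj by blast
qed


lemma mv_scale: "(M::real^'a^'b) *v (t *\<^sub>R y) = t *\<^sub>R (M *v y)"
  by (rule matrix_vector_mult_scaleR)

lemma quad_expand_sym:
  fixes M :: "real^'k^'k"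
  assumes s0: "\<And>x y. (M *v x) \<bullet> y = x \<bullet> (M *v y)"
  shows "(M *v (x + t *\<^sub>R y)) \<bullet> (x + t *\<^sub>R y)
        = ((M *v x) \<bullet> x) + 2*t*((M *v x) \<bullet> y) + t^2 * ((M *v y) \<bullet> y)"
proof -
  have s: "(M *v y) \<bullet> x = (M *v x) \<bullet> y" using s0 by (metis inner_commute)
  show ?thesis
    unfolding matrix_vector_right_distrib mv_scale inner_add_left inner_add_right inner_scaleR_left inner_scaleR_right s
    by (simp add: power2_eq_square algebra_simps)
qed

lemma quad_scale: "((M::real^'a^'a)  *v (t *\<^sub>R y)) \<bullet> (t *\<^sub>R y) = t^2 * ((M *v y) \<bullet> y)"
  unfolding mv_scale inner_scaleR_left inner_scaleR_right by (simp only: power2_eq_square mult.assoc)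

lemma cont_mv: "continuous_on S (\<lambda>y. (A::real^'a^'b) *v y)"
  by (rule linear_continuous_on[OF matrix_vector_mul_bounded_linear])

lemma rayleigh:
  fixes K :: "real^'k^'k"
  assumes P: "sympd P" and Ks: "\<And>x y. (K *v x) \<bullet> y = x \<bullet> (K *v y)"
  shows "\<exists>c\<in>real_eigenvalues (matrix_inv P ** K). \<forall>y. (K *v y) \<bullet> y \<le> c * ((P *v y) \<bullet> y)"
proof -
  have Ps: "\<And>x y. (P *v x) \<bullet> y = x \<bullet> (P *v y)" and Pp: "\<And>x. x \<noteq> 0 \<Longrightarrow> 0 < (P *v x) \<bullet> x"
    using P unfolding sympd_def by auto
  define R where "R y = ((K *v y) \<bullet> y) / ((P *v y) \<bullet> y)" for y
  have nz: "\<forall>y\<in>sphere (0::real^'k) 1. (P *v y) \<bullet> y \<noteq> 0"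
  proof
    fix y :: "real^'k" assume "y \<in> sphere 0 1"
    then have "y \<noteq> 0" by auto
    then show "(P *v y) \<bullet> y \<noteq> 0" using Pp by force
  qed
  have "continuous_on (sphere 0 1) R"
    unfolding R_def
    by (intro continuous_on_divide continuous_on_inner cont_mv continuous_on_id nz)
  then obtain y0 where y0: "y0 \<in> sphere 0 1" and mx: "\<And>y. y \<in> sphere 0 1 \<Longrightarrow> R y \<le> R y0"
    using continuous_attains_sup[of "sphere (0::real^'k) 1" R] by auto
  define c where "c = R y0"
  have y0nz: "y0 \<noteq> 0" using y0 by auto
  have le: "(K *v y) \<bullet> y \<le> c * ((P *v y) \<bullet> y)" for y
  proof (cases "y = 0")
    case True then show ?thesis by simp
  next
    case False
    define z where "z = (1 / norm y) *\<^sub>R y"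
    have "z \<in> sphere 0 1" using False unfolding z_def by simp
    then have "R z \<le> c" using mx c_def by simp
    moreover have "R z = R y" unfolding R_def z_def quad_scale using False by simp
    ultimately have "R y \<le> c" by simp
    then show ?thesis using Pp[OF False] unfolding R_def by (simp add: pos_divide_le_eq)
  qed
  define F where "F y = (K *v y) \<bullet> y - c * ((P *v y) \<bullet> y)" for y
  have Fle: "F y \<le> 0" for y using le[of y] unfolding F_def by simp
  have F0: "F y0 = 0" using Pp[OF y0nz] unfolding F_def c_def R_def by simp
  define g where "g = K *v y0 - c *\<^sub>R (P *v y0)"
  have Fexp: "F (y0 + t *\<^sub>R g) = 2 * t * (g \<bullet> g) + t^2 * F g" for t
  proof -
    have "F (y0 + t *\<^sub>R g) = F y0 + 2*t*((K *v y0) \<bullet> g - c * ((P *v y0) \<bullet> g)) + t^2 * F g"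
      unfolding F_def quad_expand_sym[OF Ks] quad_expand_sym[OF Ps] by (simp add: algebra_simps)
    also have "(K *v y0) \<bullet> g - c * ((P *v y0) \<bullet> g) = g \<bullet> g"
      unfolding g_def by (simp add: inner_diff_left)
    finally show ?thesis using F0 by simp
  qed
  have "g \<bullet> g = 0"
  proof (rule ccontr)
    assume "g \<bullet> g \<noteq> 0"
    then have sp: "g \<bullet> g > 0" by (simp add: order_less_le)
    define s where "s = g \<bullet> g"
    define \<phi> where "\<phi> = F g"
    have ph: "\<phi> \<le> 0" using Fle unfolding \<phi>_def by simp
    define t where "t = s / (1 - \<phi>)"
    have tp: "t > 0" using sp ph unfolding t_def s_def by simp
    have "t * (2 * s + t * \<phi>) \<le> 0" using Fle[of "y0 + t *\<^sub>R g"] unfolding Fexp s_def \<phi>_def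
      by (simp add: power2_eq_square algebra_simps)
    then have "2 * s + t * \<phi> \<le> 0" using tp by (simp add: mult_le_0_iff)
    then have "2 * s * (1 - \<phi>) + s * \<phi> \<le> 0" using ph unfolding t_def
      by (simp add: field_simps)
    then have "s * (2 - \<phi>) \<le> 0" by (simp add: algebra_simps)
    then show False using sp ph unfolding s_def by (simp add: mult_le_0_iff)
  qed
  then have "K *v y0 = c *\<^sub>R (P *v y0)" unfolding g_def by simp
  then have "c \<in> real_eigenvalues (matrix_inv P ** K)" using eig_char[OF P] y0nz by blast
  then show ?thesis using le by blast
qed

lemma lambda_max_bound:
  fixes K :: "real^'k^'k"
  assumes P: "sympd P" and Ks: "\<And>x y. (K *v x) \<bullet> y = x \<bullet> (K *v y)"
  shows "(K *v y) \<bullet> y \<le> lambda_max (matrix_inv P ** K) * ((P *v y) \<bullet> y)"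
proof -
  obtain c where c: "c \<in> real_eigenvalues (matrix_inv P ** K)" "\<And>y. (K *v y) \<bullet> y \<le> c * ((P *v y) \<bullet> y)"
    using rayleigh[OF assms] by blast
  have "c \<le> lambda_max (matrix_inv P ** K)"
    unfolding lambda_max_def using eig_finite[OF assms] c(1) by simp
  moreover have "0 \<le> (P *v y) \<bullet> y" using P unfolding sympd_def by (cases "y = 0") (auto simp: less_imp_le)
  ultimately show ?thesis using c(2)[of y] by (meson mult_right_mono order_trans)
qed

lemma lambda_max_nonneg:
  fixes K :: "real^'k^'k"
  assumes P: "sympd P" and Ks: "\<And>x y. (K *v x) \<bullet> y = x \<bullet> (K *v y)"
    and Kp: "\<And>y. 0 \<le> (K *v y) \<bullet> y"
  shows "0 \<le> lambda_max (matrix_inv P ** K)"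
proof -
  obtain c where c: "c \<in> real_eigenvalues (matrix_inv P ** K)"
    using rayleigh[OF P Ks] by blast
  then obtain v where v: "v \<noteq> 0" "K *v v = c *\<^sub>R (P *v v)" using eig_char[OF P] by blast
  have pos: "0 < (P *v v) \<bullet> v" using P v(1) unfolding sympd_def by auto
  have "0 \<le> c * ((P *v v) \<bullet> v)" using Kp[of v] v(2) by simp
  then have "0 \<le> c" using pos by (simp add: zero_le_mult_iff)
  also have "c \<le> lambda_max (matrix_inv P ** K)"
    unfolding lambda_max_def using eig_finite[OF P Ks] c by simp
  finally show ?thesis .
qed

theorem lemma5p4:
  fixes B :: "real^'m^'n"
    and f :: "real^'m \<Rightarrow> real" and h :: "real^'n \<Rightarrow> real"
    and gf gfB :: "real^'m \<Rightarrow> real^'m" and gh ghB :: "real^'n \<Rightarrow> real^'n"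
    and TU IV :: "real^'m^'m" and TP IQ :: "real^'n^'n"
    and LfB LhB LeU LeP LS :: real
  assumes spd: "spd TU" "spd IV" "spd TP" "spd IQ"
    and grad_f: "\<And>u. GDERIV f u :> gf u"
    and grad_h: "\<And>p. GDERIV h p :> gh p"
    and grad_fB: "\<And>u. GDERIV (\<lambda>u. f u + 1/2 * (((transpose B ** matrix_inv TP ** B) *v u) \<bullet> u)) u :> gfB u"
    and grad_hB: "\<And>p. GDERIV (\<lambda>p. h p + 1/2 * (((B ** matrix_inv TU ** transpose B) *v p) \<bullet> p)) p :> ghB p"
    and lip_fB: "\<And>u1 u2. mnorm (matrix_inv IV) (gfB u1 - gfB u2) \<le> LfB * mnorm IV (u1 - u2)"
    and lip_hB: "\<And>p1 p2. mnorm (matrix_inv IQ) (ghB p1 - ghB p2) \<le> LhB * mnorm IQ (p1 - p2)"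
    and lip_eU: "\<And>u1 u2. mnorm IV ((u1 - matrix_inv TU *v gf u1) - (u2 - matrix_inv TU *v gf u2))
                   \<le> LeU * mnorm IV (u1 - u2)"
    and lip_eP: "\<And>p1 p2. mnorm IQ ((p1 - matrix_inv TP *v gh p1) - (p2 - matrix_inv TP *v gh p2))
                   \<le> LeP * mnorm IQ (p1 - p2)"
    and LS: "LS = sqrt (lambda_max (matrix_inv IQ ** B ** matrix_inv IV ** transpose B))"
  shows "\<forall>u1 u2 p1 p2.
     (let eU = (\<lambda>u. u - matrix_inv TU *v gf u);
          eP = (\<lambda>p. p - matrix_inv TP *v gh p);
          Gu = (\<lambda>u p. - (matrix_inv IV *v (gfB u + transpose B *v eP p)));
          Gp = (\<lambda>u p. - (matrix_inv IQ *v (ghB p - B *v eU u)))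
      in mnorm IV (Gu u1 p1 - Gu u2 p2) \<le> LfB * mnorm IV (u1 - u2) + LS * LeP * mnorm IQ (p1 - p2)
       \<and> mnorm IQ (Gp u1 p1 - Gp u2 p2) \<le> LhB * mnorm IQ (p1 - p2) + LS * LeU * mnorm IV (u1 - u2))"
proof (intro allI)
  fix u1 u2 :: "real^'m" and p1 p2 :: "real^'n"
  have IV: "sympd IV" and IQ: "sympd IQ" using spd(2,4) spd_sympd by auto
  have IVi: "sympd (matrix_inv IV)" and IQi: "sympd (matrix_inv IQ)" using IV IQ sympd_matrix_inv by auto
  define K where "K = B ** matrix_inv IV ** transpose B"
  have Kv: "K *v y = B *v (matrix_inv IV *v (transpose B *v y))" for y
    unfolding K_def by (simp only: matrix_vector_mul_assoc matrix_mul_assoc)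
  have Bd: "(B *v z) \<bullet> y = z \<bullet> (transpose B *v y)" for z y
    using tr_dot[of B y z] by (simp add: inner_commute)
  have IVis: "\<And>x y. (matrix_inv IV *v x) \<bullet> y = x \<bullet> (matrix_inv IV *v y)"
    using IVi unfolding sympd_def by auto
  have Ks: "(K *v x) \<bullet> y = x \<bullet> (K *v y)" for x y
    unfolding Kv Bd IVis by (metis tr_dot)
  have LS': "LS = sqrt (lambda_max (matrix_inv IQ ** K))"
    unfolding LS K_def by (simp add: matrix_mul_assoc)
  have Kp: "0 \<le> (K *v y) \<bullet> y" for y
  proof -
    have "(K *v y) \<bullet> y = (matrix_inv IV *v (transpose B *v y)) \<bullet> (transpose B *v y)"
      unfolding Kv Bd ..
    also have "\<dots> = (mnorm (matrix_inv IV) (transpose B *v y))^2" using mnorm_sq[OF IVi] by simp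
    finally show ?thesis by simp
  qed
  have LSnn: "0 \<le> LS" unfolding LS' using lambda_max_nonneg[OF IQ Ks Kp] by simp
  have BT: "mnorm (matrix_inv IV) (transpose B *v y) \<le> LS * mnorm IQ y" for y
  proof -
    have "mnorm (matrix_inv IV) (transpose B *v y) = sqrt ((K *v y) \<bullet> y)"
      unfolding mnorm_def Kv Bd by (simp add: inner_commute)
    also have "\<dots> \<le> sqrt (lambda_max (matrix_inv IQ ** K) * ((IQ *v y) \<bullet> y))"
      using lambda_max_bound[OF IQ Ks] by simp
    also have "\<dots> = LS * mnorm IQ y" unfolding LS' mnorm_def by (simp add: real_sqrt_mult)
    finally show ?thesis .
  qed
  have BB: "mnorm (matrix_inv IQ) (B *v x) \<le> LS * mnorm IV x" for x
  proof -
    define z where "z = B *v x"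
    define y where "y = matrix_inv IQ *v z"
    define n where "n = mnorm (matrix_inv IQ) z"
    have nn: "0 \<le> n" unfolding n_def using mnorm_nonneg[OF IQi] .
    have "n^2 = (matrix_inv IQ *v z) \<bullet> z" unfolding n_def using mnorm_sq[OF IQi] .
    also have "\<dots> = x \<bullet> (transpose B *v y)" unfolding y_def z_def by (simp add: inner_commute Bd)
    also have "\<dots> \<le> mnorm IV x * mnorm (matrix_inv IV) (transpose B *v y)" by (rule dual_cs[OF IV])
    also have "\<dots> \<le> mnorm IV x * (LS * mnorm IQ y)"
      using BT mnorm_nonneg[OF IV] by (simp add: mult_left_mono)
    also have "mnorm IQ y = n" unfolding y_def n_def by (rule mnorm_inv[OF IQ])
    finally have "n * n \<le> n * (LS * mnorm IV x)" by (simp add: power2_eq_square algebra_simps)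
    then have "n \<le> LS * mnorm IV x"
      using nn LSnn mnorm_nonneg[OF IV]
      by (metis mult_le_cancel_left mult_nonneg_nonneg order_le_less)
    then show ?thesis unfolding n_def z_def .
  qed
  define eU where "eU = (\<lambda>u. u - matrix_inv TU *v gf u)"
  define eP where "eP = (\<lambda>p. p - matrix_inv TP *v gh p)"
  define Gu where "Gu = (\<lambda>u p. - (matrix_inv IV *v (gfB u + transpose B *v eP p)))"
  define Gp where "Gp = (\<lambda>u p. - (matrix_inv IQ *v (ghB p - B *v eU u)))"
  have "Gu u1 p1 - Gu u2 p2 = - (matrix_inv IV *v ((gfB u1 - gfB u2) + transpose B *v (eP p1 - eP p2)))"
    unfolding Gu_def by (simp add: matrix_vector_mult_diff_distrib matrix_vector_right_distrib algebra_simps)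
  then have "mnorm IV (Gu u1 p1 - Gu u2 p2)
      = mnorm (matrix_inv IV) ((gfB u1 - gfB u2) + transpose B *v (eP p1 - eP p2))"
    by (simp add: mnorm_minus mnorm_inv[OF IV])
  also have "\<dots> \<le> mnorm (matrix_inv IV) (gfB u1 - gfB u2) + mnorm (matrix_inv IV) (transpose B *v (eP p1 - eP p2))"
    by (rule mnorm_triangle[OF IVi])
  also have "\<dots> \<le> LfB * mnorm IV (u1 - u2) + LS * mnorm IQ (eP p1 - eP p2)"
    using lip_fB BT by (meson add_mono)
  also have "\<dots> \<le> LfB * mnorm IV (u1 - u2) + LS * (LeP * mnorm IQ (p1 - p2))"
    using lip_eP[of p1 p2] LSnn unfolding eP_def by (simp add: mult_left_mono)
  finally have G1: "mnorm IV (Gu u1 p1 - Gu u2 p2) \<le> LfB * mnorm IV (u1 - u2) + LS * LeP * mnorm IQ (p1 - p2)"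
    by (simp add: mult.assoc)
  have "Gp u1 p1 - Gp u2 p2 = - (matrix_inv IQ *v ((ghB p1 - ghB p2) + - (B *v (eU u1 - eU u2))))"
    unfolding Gp_def by (simp add: matrix_vector_mult_diff_distrib matrix_vector_right_distrib algebra_simps)
  then have "mnorm IQ (Gp u1 p1 - Gp u2 p2)
      = mnorm (matrix_inv IQ) ((ghB p1 - ghB p2) + - (B *v (eU u1 - eU u2)))"
    by (simp add: mnorm_minus mnorm_inv[OF IQ])
  also have "\<dots> \<le> mnorm (matrix_inv IQ) (ghB p1 - ghB p2) + mnorm (matrix_inv IQ) (- (B *v (eU u1 - eU u2)))"
    by (rule mnorm_triangle[OF IQi])
  also have "\<dots> \<le> LhB * mnorm IQ (p1 - p2) + LS * mnorm IV (eU u1 - eU u2)"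
    using lip_hB BB by (metis add_mono mnorm_minus)
  also have "\<dots> \<le> LhB * mnorm IQ (p1 - p2) + LS * (LeU * mnorm IV (u1 - u2))"
    using lip_eU[of u1 u2] LSnn unfolding eU_def by (simp add: mult_left_mono)
  finally have G2: "mnorm IQ (Gp u1 p1 - Gp u2 p2) \<le> LhB * mnorm IQ (p1 - p2) + LS * LeU * mnorm IV (u1 - u2)"
    by (simp add: mult.assoc)
  show "let eU = (\<lambda>u. u - matrix_inv TU *v gf u);
          eP = (\<lambda>p. p - matrix_inv TP *v gh p);
          Gu = (\<lambda>u p. - (matrix_inv IV *v (gfB u + transpose B *v eP p)));
          Gp = (\<lambda>u p. - (matrix_inv IQ *v (ghB p - B *v eU u)))
      in mnorm IV (Gu u1 p1 - Gu u2 p2) \<le> LfB * mnorm IV (u1 - u2) + LS * LeP * mnorm IQ (p1 - p2)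
       \<and> mnorm IQ (Gp u1 p1 - Gp u2 p2) \<le> LhB * mnorm IQ (p1 - p2) + LS * LeU * mnorm IV (u1 - u2)"
    using G1 G2 unfolding Let_def eU_def eP_def Gu_def Gp_def by blast
qed

end
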